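(* Let $\mu$ be a compactly supported positive Borel measure on $\mathbb{C}$ with infinite support, and let $\mathbf{D}$ be its associated Hessenberg matrix. Then $$\operatorname{Co}(\operatorname{supp}(\mu))=\overline{\{v\mathbf{D}v^*: v\in c_{00},\ vv^*=1\}}=\overline{\bigcup_{n=0}^\infty W(\mathbf{D}_n)},$$ where $\mathbf{D}_n$ is the $(n+1)\times(n+1)$ leading section of $\mathbf{D}$.
   Context: Let $(\varphi_n)_{n\ge0}$ be the orthonormal polynomials in $L^2(\mu)$ obtained by Gram–Schmidt from $1,z,z^2,\dots$ ($\deg\varphi_n=n$). The Hessenberg matrix of $\mu$ is the infinite matrix $\mathbf{D}=(d_{i,j})_{i,j\ge0}$, $d_{i,j}=\int z\varphi_j(z)\overline{\varphi_i(z)}\,d\mu$, i.e. the matrix of the operator of multiplication by $z$ on $P^2(\mu)$ (the closure of the polynomials in $L^2(\mu)$) in the orthonormal basis $(\varphi_n)$. $c_{00}$ is the space of finitely supported complex row sequences. For a finite square matrix $\mathbf{A}$ of size $k$, $W(\mathbf{A})=\{v\mathbf{A}v^*: v\in\mathbb{C}^k, vv^*=1\}$. $\operatorname{Co}$ denotes convex hull. *)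

theory Defs
  imports "HOL-Analysis.Analysis"
begin

definition msupp :: "complex measure \<Rightarrow> complex set" where
  "msupp M = {z. \<forall>e>0. emeasure M (ball z e) \<noteq> 0}"

definition l2ip :: "complex measure \<Rightarrow> (complex \<Rightarrow> complex) \<Rightarrow> (complex \<Rightarrow> complex) \<Rightarrow> complex" where
  "l2ip M f g = (\<integral>z. f z * cnj (g z) \<partial>M)"

definition l2normalize :: "complex measure \<Rightarrow> (complex \<Rightarrow> complex) \<Rightarrow> (complex \<Rightarrow> complex)" where
  "l2normalize M u = (\<lambda>z. u z / complex_of_real (sqrt (Re (l2ip M u u))))"

fun gs_list :: "complex measure \<Rightarrow> nat \<Rightarrow> (complex \<Rightarrow> complex) list" where
  "gs_list M 0 = [l2normalize M (\<lambda>z. 1)]"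
| "gs_list M (Suc n) =
     (let ps = gs_list M n;
          u = (\<lambda>z. z ^ Suc n - (\<Sum>p\<leftarrow>ps. l2ip M (\<lambda>w. w ^ Suc n) p * p z))
      in ps @ [l2normalize M u])"

definition orthpoly :: "complex measure \<Rightarrow> nat \<Rightarrow> complex \<Rightarrow> complex" where
  "orthpoly M n = gs_list M n ! n"

definition hessenberg :: "complex measure \<Rightarrow> nat \<Rightarrow> nat \<Rightarrow> complex" where
  "hessenberg M i j = l2ip M (\<lambda>z. z * orthpoly M j z) (orthpoly M i)"

definition hess_numrange :: "complex measure \<Rightarrow> complex set" where
  "hess_numrange M =
     {\<Sum>i\<in>S. \<Sum>j\<in>S. v i * hessenberg M i j * cnj (v j) | v S.
        finite S \<and> (\<forall>i. i \<notin> S \<longrightarrow> v i = 0) \<and> (\<Sum>i\<in>S. (cmod (v i))^2) = 1}"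

definition section_numrange :: "complex measure \<Rightarrow> nat \<Rightarrow> complex set" where
  "section_numrange M n =
     {\<Sum>i\<le>n. \<Sum>j\<le>n. v i * hessenberg M i j * cnj (v j) | v.
        (\<Sum>i\<le>n. (cmod (v i))^2) = 1}"

end

theory Submission
  imports Defs "HOL-Computational_Algebra.Polynomial"
begin

locale hm =
  fixes M :: "complex measure"
  assumes sM: "sets M = sets borel" and fin: "finite_measure M"
    and cK: "compact (msupp M)" and iK: "infinite (msupp M)"
begin

abbreviation "K \<equiv> msupp M"

lemma space_M: "space M = UNIV"
  using sets_eq_imp_space_eq[OF sM] by simp

lemma meas_cont: "continuous_on UNIV f \<Longrightarrow> f \<in> borel_measurable M"
  using measurable_cong_sets[OF sM refl] borel_measurable_continuous_onI by blast

lemma open_sets: "open U \<Longrightarrow> U \<in> sets M"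
  using sM by simp

lemma AE_K: "AE z in M. z \<in> K"
proof -
  define F where "F = {ball z e | z e. e > 0 \<and> emeasure M (ball z e) = 0}"
  obtain F' where F': "F' \<subseteq> F" "countable F'" "\<Union>F' = \<Union>F"
    using Lindelof[of F] unfolding F_def by auto
  have null: "\<Union>F' \<in> null_sets M"
  proof -
    have "(\<Union>B\<in>F'. B) \<in> null_sets M"
      apply (rule null_sets_UN'[OF F'(2)])
      using F'(1) open_sets unfolding F_def by auto
    thus ?thesis by simp
  qed
  show ?thesis
  proof (rule AE_I'[OF null])
    show "{x \<in> space M. x \<notin> K} \<subseteq> \<Union>F'"
    proof
      fix x assume "x \<in> {x \<in> space M. x \<notin> K}"
      then obtain e where "e > 0" "emeasure M (ball x e) = 0"
        unfolding msupp_def by auto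
      hence "ball x e \<in> F" unfolding F_def using \<open>e>0\<close> by auto
      hence "x \<in> \<Union>F" using \<open>e>0\<close> by (meson UnionI centre_in_ball)
      thus "x \<in> \<Union>F'" using F' by simp
    qed
  qed
qed

lemma int_cont: assumes "continuous_on UNIV (f :: complex \<Rightarrow> 'b::{banach,second_countable_topology})"
  shows "integrable M f"
proof -
  have "compact (f ` K)" using compact_continuous_image[OF continuous_on_subset[OF assms] cK] by auto
  then obtain B where B: "\<forall>y\<in>f`K. norm y \<le> B" using compact_imp_bounded bounded_iff by metis
  have "AE z in M. norm (f z) \<le> B" using AE_K by eventually_elim (use B in auto)
  thus ?thesis using finite_measure.integrable_const_bound[OF fin] meas_cont[OF assms] by blast
qed

lemma pos_ball: "z \<in> K \<Longrightarrow> e > 0 \<Longrightarrow> emeasure M (ball z e) > 0"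
  unfolding msupp_def using zero_less_iff_neq_zero by auto


lemma fm: "finite_measure M" by (rule fin)

lemma meas_ball_pos: "z \<in> K \<Longrightarrow> e > 0 \<Longrightarrow> measure M (ball z e) > 0"
  using pos_ball[of z e] finite_measure.emeasure_eq_measure[OF fin]
  by (metis ennreal_less_zero_iff)

lemma int_lower:
  fixes f :: "complex \<Rightarrow> real"
  assumes "integrable M f" "AE z in M. f z \<ge> 0" "\<forall>z\<in>ball z0 r. f z \<ge> c" "c \<ge> 0"
  shows "integral\<^sup>L M f \<ge> c * measure M (ball z0 r)"
proof -
  have ib: "integrable M (\<lambda>z. c * indicator (ball z0 r) z)"
    using open_sets[of "ball z0 r"] finite_measure.integrable_const[OF fin]
    by (intro integrable_mult_right) (simp add: finite_measure.emeasure_eq_measure[OF fin])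
  have "integral\<^sup>L M (\<lambda>z. c * indicator (ball z0 r) z) \<le> integral\<^sup>L M f"
  proof (rule integral_mono_AE[OF ib assms(1)])
    show "AE z in M. c * indicator (ball z0 r) z \<le> f z"
      using assms(2) by eventually_elim (use assms(3) in \<open>auto simp: indicator_def\<close>)
  qed
  moreover have "integral\<^sup>L M (\<lambda>z. c * indicator (ball z0 r) z) = c * measure M (ball z0 r)"
    using open_sets[of "ball z0 r"] by (simp add: space_M)
  ultimately show ?thesis by (simp add: space_M)
qed

lemma ip_conj: "l2ip M f g = cnj (l2ip M g f)"
proof -
  have "cnj (\<integral>z. g z * cnj (f z) \<partial>M) = (\<integral>z. cnj (g z * cnj (f z)) \<partial>M)"
    by (rule Bochner_Integration.integral_cnj[symmetric])
  thus ?thesis unfolding l2ip_def by (simp add: mult.commute)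
qed

lemma ip_self: "l2ip M f f = of_real (\<integral>z. (cmod (f z))\<^sup>2 \<partial>M)"
proof -
  have "(\<lambda>z. f z * cnj (f z)) = (\<lambda>z. complex_of_real ((cmod (f z))\<^sup>2))"
    by (rule ext) (metis complex_norm_square)
  thus ?thesis unfolding l2ip_def by (simp only: Bochner_Integration.integral_complex_of_real)
qed

lemma ip_self_nonneg: "Re (l2ip M f f) \<ge> 0" "Im (l2ip M f f) = 0"
  unfolding ip_self by auto

lemma ip_lin1:
  assumes "continuous_on UNIV f" "continuous_on UNIV g" "continuous_on UNIV h"
  shows "l2ip M (\<lambda>z. a * f z + b * g z) h = a * l2ip M f h + b * l2ip M g h"
proof -
  have i1: "integrable M (\<lambda>z. f z * cnj (h z))" "integrable M (\<lambda>z. g z * cnj (h z))"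
    by (intro int_cont continuous_intros assms)+
  have "(\<lambda>z. (a * f z + b * g z) * cnj (h z)) = (\<lambda>z. a * (f z * cnj (h z)) + b * (g z * cnj (h z)))"
    by (auto simp: algebra_simps)
  thus ?thesis unfolding l2ip_def using i1 by simp
qed

lemma ip_sum1:
  fixes f :: "'i \<Rightarrow> complex \<Rightarrow> complex" and a :: "'i \<Rightarrow> complex"
  assumes "finite S" "\<And>j. j \<in> S \<Longrightarrow> continuous_on UNIV (f j)" "continuous_on UNIV h"
  shows "l2ip M (\<lambda>z. \<Sum>j\<in>S. a j * f j z) h = (\<Sum>j\<in>S. a j * l2ip M (f j) h)"
proof -
  have i1: "\<And>j. j \<in> S \<Longrightarrow> integrable M (\<lambda>z. a j * (f j z * cnj (h z)))"
    by (intro int_cont continuous_intros assms) auto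
  have "(\<lambda>z. (\<Sum>j\<in>S. a j * f j z) * cnj (h z)) = (\<lambda>z. \<Sum>j\<in>S. a j * (f j z * cnj (h z)))"
    by (simp add: sum_distrib_right mult.assoc)
  thus ?thesis unfolding l2ip_def using i1 by (simp add: integral_sum)
qed

lemma ip_sum2:
  fixes f :: "'i \<Rightarrow> complex \<Rightarrow> complex" and a :: "'i \<Rightarrow> complex"
  assumes "finite S" "\<And>j. j \<in> S \<Longrightarrow> continuous_on UNIV (f j)" "continuous_on UNIV h"
  shows "l2ip M h (\<lambda>z. \<Sum>j\<in>S. a j * f j z) = (\<Sum>j\<in>S. cnj (a j) * l2ip M h (f j))"
proof -
  have *: "\<And>j. l2ip M h (f j) = cnj (l2ip M (f j) h)" by (metis ip_conj)
  have "l2ip M h (\<lambda>z. \<Sum>j\<in>S. a j * f j z) = cnj (l2ip M (\<lambda>z. \<Sum>j\<in>S. a j * f j z) h)"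
    by (rule ip_conj)
  also have "\<dots> = cnj (\<Sum>j\<in>S. a j * l2ip M (f j) h)" using ip_sum1[OF assms, where a=a] by simp
  also have "\<dots> = (\<Sum>j\<in>S. cnj (a j) * cnj (l2ip M (f j) h))" by simp
  finally show ?thesis using * by simp
qed

lemma ip_lin2:
  assumes "continuous_on UNIV f" "continuous_on UNIV g" "continuous_on UNIV h"
  shows "l2ip M h (\<lambda>z. a * f z + b * g z) = cnj a * l2ip M h f + cnj b * l2ip M h g"
  apply (subst ip_conj)
  apply (subst ip_lin1[OF assms])
  using ip_conj[of h] by simp

lemma ip_scale:
  assumes "continuous_on UNIV f"
  shows "l2ip M (\<lambda>z. c * (a * f z)) (\<lambda>z. a * f z) = a * cnj a * l2ip M (\<lambda>z. c * f z) f"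
    "l2ip M (\<lambda>z. a * f z) (\<lambda>z. a * f z) = a * cnj a * l2ip M f f"
  unfolding l2ip_def by (simp_all add: algebra_simps)

lemma poly_pos:
  assumes "q \<noteq> 0"
  shows "Re (l2ip M (poly q) (poly q)) > 0"
proof -
  have "finite {z. poly q z = 0}" using poly_roots_finite[OF assms] .
  then obtain z1 where z1: "z1 \<in> K" "poly q z1 \<noteq> 0"
    using iK by (metis (mono_tags, lifting) finite_subset mem_Collect_eq subsetI)
  define c where "c = cmod (poly q z1) / 2"
  have c: "c > 0" using z1 unfolding c_def by auto
  have "continuous (at z1) (\<lambda>z. cmod (poly q z))" by (intro continuous_intros)
  then obtain r where r: "r > 0" "\<forall>z. dist z z1 < r \<longrightarrow> dist (cmod (poly q z)) (cmod (poly q z1)) < c"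
    using c unfolding continuous_at_eps_delta by blast
  have lb: "\<forall>z\<in>ball z1 r. (cmod (poly q z))\<^sup>2 \<ge> c\<^sup>2"
  proof
    fix z assume "z \<in> ball z1 r"
    hence "dist (cmod (poly q z)) (cmod (poly q z1)) < c" using r by (simp add: dist_commute[of z1])
    hence "cmod (poly q z) \<ge> c" unfolding c_def dist_real_def
      using abs_ge_minus_self[of "cmod (poly q z) - cmod (poly q z1)"] by linarith
    thus "(cmod (poly q z))\<^sup>2 \<ge> c\<^sup>2" using c by (simp add: power_mono)
  qed
  have "(\<integral>z. (cmod (poly q z))\<^sup>2 \<partial>M) \<ge> c\<^sup>2 * measure M (ball z1 r)"
    by (rule int_lower[OF _ _ lb]) (auto intro!: int_cont continuous_intros)
  moreover have "c\<^sup>2 * measure M (ball z1 r) > 0" using c meas_ball_pos[OF z1(1) r(1)] by simp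
  ultimately show ?thesis unfolding ip_self by simp
qed

end


lemma gs_len: "length (gs_list M n) = Suc n"
  by (induction n) (simp_all add: Let_def)

lemma gs_map: "gs_list M n = map (orthpoly M) [0..<Suc n]"
proof (induction n)
  case 0
  then show ?case by (simp add: orthpoly_def)
next
  case (Suc n)
  define x where "x = l2normalize M (\<lambda>z. z ^ Suc n - (\<Sum>p\<leftarrow>gs_list M n. l2ip M (\<lambda>w. w ^ Suc n) p * p z))"
  have e: "gs_list M (Suc n) = gs_list M n @ [x]" by (simp add: Let_def x_def)
  have "orthpoly M (Suc n) = x" unfolding orthpoly_def e using gs_len[of M n] by (simp add: nth_append)
  thus ?case using e Suc by simp
qed

lemma orthpoly_rec: "orthpoly M n = l2normalize M (\<lambda>z. z ^ n - (\<Sum>k<n. l2ip M (\<lambda>w. w ^ n) (orthpoly M k) * orthpoly M k z))"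
proof (cases n)
  case 0
  then show ?thesis by (simp add: orthpoly_def)
next
  case (Suc m)
  have "orthpoly M (Suc m) = gs_list M (Suc m) ! Suc m" by (simp add: orthpoly_def)
  also have "\<dots> = l2normalize M (\<lambda>z. z ^ Suc m - (\<Sum>p\<leftarrow>gs_list M m. l2ip M (\<lambda>w. w ^ Suc m) p * p z))"
    using gs_len[of M m] by (simp add: Let_def nth_append)
  also have "(\<lambda>z. (\<Sum>p\<leftarrow>gs_list M m. l2ip M (\<lambda>w. w ^ Suc m) p * p z)) =
      (\<lambda>z. \<Sum>k<Suc m. l2ip M (\<lambda>w. w ^ Suc m) (orthpoly M k) * orthpoly M k z)"
  proof
    fix z
    have "(\<Sum>p\<leftarrow>gs_list M m. l2ip M (\<lambda>w. w ^ Suc m) p * p z) =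
        (\<Sum>k\<leftarrow>[0..<Suc m]. l2ip M (\<lambda>w. w ^ Suc m) (orthpoly M k) * orthpoly M k z)"
      unfolding gs_map by (simp add: o_def)
    also have "\<dots> = (\<Sum>k\<in>set [0..<Suc m]. l2ip M (\<lambda>w. w ^ Suc m) (orthpoly M k) * orthpoly M k z)"
      by (rule sum_list_distinct_conv_sum_set) simp
    also have "set [0..<Suc m] = {..<Suc m}" by auto
    finally show "(\<Sum>p\<leftarrow>gs_list M m. l2ip M (\<lambda>w. w ^ Suc m) p * p z) =
        (\<Sum>k<Suc m. l2ip M (\<lambda>w. w ^ Suc m) (orthpoly M k) * orthpoly M k z)" .
  qed
  finally show ?thesis using Suc by simp
qed



lemma ip_smul1: "l2ip M (\<lambda>z. a * f z) g = a * l2ip M f g"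
  unfolding l2ip_def by (simp add: mult.assoc)

lemma ip_smul2: "l2ip M f (\<lambda>z. a * g z) = cnj a * l2ip M f g"
  unfolding l2ip_def by (simp add: mult_ac)

context hm begin

abbreviation "\<phi> \<equiv> orthpoly M"

definition uu :: "nat \<Rightarrow> complex \<Rightarrow> complex" where
  "uu n = (\<lambda>z. z ^ n - (\<Sum>k<n. l2ip M (\<lambda>w. w ^ n) (\<phi> k) * \<phi> k z))"

lemma ip_real: "l2ip M f f = of_real (Re (l2ip M f f))"
  using ip_self_nonneg(2)[of f] by (simp add: complex_eq_iff)

lemma GS_all: "(\<exists>q. \<phi> n = poly q \<and> degree q \<le> n) \<and> (\<forall>k<n. l2ip M (\<phi> n) (\<phi> k) = 0)
   \<and> l2ip M (\<phi> n) (\<phi> n) = 1 \<and> Re (l2ip M (uu n) (uu n)) > 0"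
proof (induction n rule: less_induct)
  case (less n)
  define Q where "Q k = (SOME q. \<phi> k = poly q \<and> degree q \<le> k)" for k
  have Q: "\<phi> k = poly (Q k) \<and> degree (Q k) \<le> k" if "k < n" for k
    unfolding Q_def by (rule someI_ex) (use less that in blast)
  have orth: "l2ip M (\<phi> j) (\<phi> k) = (if j = k then 1 else 0)" if "j < n" "k < n" for j k
  proof (cases j k rule: linorder_cases)
    case less
    then show ?thesis using less.IH[OF that(2)] ip_conj[of "\<phi> j" "\<phi> k"] by simp
  next
    case equal
    then show ?thesis using less.IH[OF that(1)] by simp
  next
    case greater
    then show ?thesis using less.IH[OF that(1)] by simp
  qed
  have contphi: "continuous_on UNIV (\<phi> k)" if "k < n" for k
    using Q[OF that] by (auto intro!: continuous_intros)
  define c where "c k = l2ip M (\<lambda>w. w ^ n) (\<phi> k)" for k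
  define U where "U = monom 1 n - (\<Sum>k<n. smult (c k) (Q k))"
  have polyU: "poly U = uu n"
    unfolding U_def uu_def c_def by (auto simp: poly_monom poly_sum Q intro!: sum.cong)
  have "coeff U n = 1"
  proof -
    have "coeff (Q k) n = 0" if "k < n" for k using Q[OF that] that by (intro coeff_eq_0) auto
    thus ?thesis unfolding U_def by (simp add: coeff_sum)
  qed
  hence U0: "U \<noteq> 0" by auto
  have dk: "\<And>k. k \<in> {..<n} \<Longrightarrow> degree (smult (c k) (Q k)) \<le> n"
    using Q by (meson degree_smult_le le_trans less_imp_le lessThan_iff)
  have degU: "degree U \<le> n" unfolding U_def
    by (intro degree_diff_le degree_monom_le degree_sum_le dk) auto
  have pos: "Re (l2ip M (uu n) (uu n)) > 0" using poly_pos[OF U0] polyU by simp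
  define s where "s = sqrt (Re (l2ip M (uu n) (uu n)))"
  have s: "s > 0" using pos unfolding s_def by simp
  have phin: "\<phi> n = (\<lambda>z. inverse (complex_of_real s) * uu n z)"
    apply (subst orthpoly_rec) unfolding l2normalize_def s_def uu_def
    by (simp add: field_simps c_def)
  have d1: "\<exists>q. \<phi> n = poly q \<and> degree q \<le> n"
    by (rule exI[of _ "smult (inverse (complex_of_real s)) U"]) (use degU phin polyU in auto)
  have d2: "\<forall>k<n. l2ip M (\<phi> n) (\<phi> k) = 0"
  proof (intro allI impI)
    fix k assume k: "k < n"
    have eu: "uu n = (\<lambda>z. 1 * z ^ n + (-1) * (\<Sum>j<n. c j * \<phi> j z))"
      unfolding uu_def c_def by auto
    have "l2ip M (uu n) (\<phi> k) = l2ip M (\<lambda>w. w ^ n) (\<phi> k) - l2ip M (\<lambda>z. \<Sum>j<n. c j * \<phi> j z) (\<phi> k)"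
      unfolding eu using contphi k by (subst ip_lin1) (auto intro!: continuous_intros)
    also have "l2ip M (\<lambda>z. \<Sum>j<n. c j * \<phi> j z) (\<phi> k) = (\<Sum>j<n. c j * l2ip M (\<phi> j) (\<phi> k))"
      using contphi k by (intro ip_sum1) auto
    also have "\<dots> = (\<Sum>j<n. if j = k then c k else 0)"
      using k by (intro sum.cong) (auto simp: orth)
    also have "\<dots> = c k" using k by simp
    finally have "l2ip M (uu n) (\<phi> k) = 0" unfolding c_def by simp
    thus "l2ip M (\<phi> n) (\<phi> k) = 0" unfolding phin ip_smul1 by simp
  qed
  have d3: "l2ip M (\<phi> n) (\<phi> n) = 1"
  proof -
    have "l2ip M (\<phi> n) (\<phi> n) = inverse (complex_of_real s) * cnj (inverse (complex_of_real s)) * l2ip M (uu n) (uu n)"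
      unfolding phin ip_smul1 ip_smul2 by simp
    also have "l2ip M (uu n) (uu n) = of_real (s\<^sup>2)" using ip_real[of "uu n"] pos unfolding s_def by simp
    finally show ?thesis using s by (simp add: field_simps power2_eq_square)
  qed
  show ?case using d1 d2 d3 pos by blast
qed

lemma orth: "l2ip M (\<phi> j) (\<phi> k) = (if j = k then 1 else 0)"
proof (cases j k rule: linorder_cases)
  case less
  then show ?thesis using GS_all[of k] ip_conj[of "\<phi> j" "\<phi> k"] by simp
next
  case equal
  then show ?thesis using GS_all[of j] by simp
next
  case greater
  then show ?thesis using GS_all[of j] by simp
qed

lemma phi_poly: "\<exists>q. \<phi> n = poly q \<and> degree q \<le> n" using GS_all by blast

lemma cont_phi[continuous_intros]: "continuous_on UNIV (\<phi> n)"
  using phi_poly[of n] by (auto intro!: continuous_intros)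

lemma span_mon: "\<exists>c. \<forall>z. z ^ n = (\<Sum>k\<le>n. c k * \<phi> k z)"
proof -
  define s where "s = sqrt (Re (l2ip M (uu n) (uu n)))"
  have s: "s > 0" using GS_all[of n] unfolding s_def by simp
  have phin: "\<phi> n = (\<lambda>z. inverse (complex_of_real s) * uu n z)"
    apply (subst orthpoly_rec) unfolding l2normalize_def s_def uu_def
    by (simp add: field_simps)
  define c where "c k = (if k = n then complex_of_real s else l2ip M (\<lambda>w. w ^ n) (\<phi> k))" for k
  have "z ^ n = (\<Sum>k\<le>n. c k * \<phi> k z)" for z
  proof -
    have "(\<Sum>k\<le>n. c k * \<phi> k z) = (\<Sum>k<n. c k * \<phi> k z) + c n * \<phi> n z"
      by (simp add: lessThan_Suc_atMost[symmetric])
    also have "c n * \<phi> n z = uu n z" using s unfolding c_def phin by simp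
    also have "(\<Sum>k<n. c k * \<phi> k z) = (\<Sum>k<n. l2ip M (\<lambda>w. w ^ n) (\<phi> k) * \<phi> k z)"
      unfolding c_def by (intro sum.cong) auto
    finally show ?thesis unfolding uu_def by simp
  qed
  thus ?thesis by blast
qed

end


context hm begin

lemma span_poly: "\<exists>d. \<forall>z. poly q z = (\<Sum>j\<le>degree q. d j * \<phi> j z)"
proof -
  have "\<forall>n. \<exists>c. \<forall>z. z ^ n = (\<Sum>k\<le>n. c k * \<phi> k z)" using span_mon by blast
  then obtain C where C: "\<And>n z. z ^ n = (\<Sum>k\<le>n. C n k * \<phi> k z)" by metis
  define N where "N = degree q"
  define C' where "C' n k = (if k \<le> n then C n k else 0)" for n k
  have C': "z ^ n = (\<Sum>k\<le>N. C' n k * \<phi> k z)" if "n \<le> N" for n z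
  proof -
    have "(\<Sum>k\<le>N. C' n k * \<phi> k z) = (\<Sum>k\<le>n. C' n k * \<phi> k z)"
      by (rule sum.mono_neutral_right) (use that in \<open>auto simp: C'_def\<close>)
    also have "\<dots> = (\<Sum>k\<le>n. C n k * \<phi> k z)" by (intro sum.cong) (auto simp: C'_def)
    finally show ?thesis using C by simp
  qed
  define d where "d k = (\<Sum>i\<le>N. coeff q i * C' i k)" for k
  have "poly q z = (\<Sum>j\<le>N. d j * \<phi> j z)" for z
  proof -
    have "poly q z = (\<Sum>i\<le>N. coeff q i * z ^ i)" unfolding N_def by (rule poly_altdef)
    also have "\<dots> = (\<Sum>i\<le>N. coeff q i * (\<Sum>k\<le>N. C' i k * \<phi> k z))"
      by (intro sum.cong) (auto simp: C')
    also have "\<dots> = (\<Sum>i\<le>N. \<Sum>k\<le>N. coeff q i * C' i k * \<phi> k z)"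
      by (simp add: sum_distrib_left mult.assoc)
    also have "\<dots> = (\<Sum>k\<le>N. \<Sum>i\<le>N. coeff q i * C' i k * \<phi> k z)" by (rule sum.swap)
    also have "\<dots> = (\<Sum>j\<le>N. d j * \<phi> j z)" unfolding d_def by (simp add: sum_distrib_right)
    finally show ?thesis .
  qed
  thus ?thesis unfolding N_def by blast
qed

lemma quadQ:
  assumes "finite S"
  shows "l2ip M (\<lambda>z. z * (\<Sum>j\<in>S. c j * \<phi> j z)) (\<lambda>z. \<Sum>j\<in>S. c j * \<phi> j z)
     = (\<Sum>i\<in>S. \<Sum>j\<in>S. cnj (c i) * hessenberg M i j * c j)"
proof -
  have e: "(\<lambda>z. z * (\<Sum>j\<in>S. c j * \<phi> j z)) = (\<lambda>z. \<Sum>j\<in>S. c j * (\<lambda>w. w * \<phi> j w) z)"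
    by (simp add: sum_distrib_left mult_ac)
  have "l2ip M (\<lambda>z. z * (\<Sum>j\<in>S. c j * \<phi> j z)) (\<lambda>z. \<Sum>j\<in>S. c j * \<phi> j z)
     = (\<Sum>j\<in>S. c j * l2ip M (\<lambda>w. w * \<phi> j w) (\<lambda>z. \<Sum>i\<in>S. c i * \<phi> i z))"
    unfolding e by (rule ip_sum1[OF assms]) (auto intro!: continuous_intros)
  also have "\<dots> = (\<Sum>j\<in>S. c j * (\<Sum>i\<in>S. cnj (c i) * hessenberg M i j))"
    unfolding hessenberg_def
    by (intro sum.cong refl arg_cong2[where f="(*)"] ip_sum2[OF assms]) (auto intro!: continuous_intros)
  also have "\<dots> = (\<Sum>j\<in>S. \<Sum>i\<in>S. cnj (c i) * hessenberg M i j * c j)"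
    by (simp add: sum_distrib_left mult_ac)
  also have "\<dots> = (\<Sum>i\<in>S. \<Sum>j\<in>S. cnj (c i) * hessenberg M i j * c j)" by (rule sum.swap)
  finally show ?thesis .
qed

lemma quadN:
  assumes "finite S"
  shows "l2ip M (\<lambda>z. \<Sum>j\<in>S. c j * \<phi> j z) (\<lambda>z. \<Sum>j\<in>S. c j * \<phi> j z)
     = of_real (\<Sum>j\<in>S. (cmod (c j))\<^sup>2)"
proof -
  have "l2ip M (\<lambda>z. \<Sum>j\<in>S. c j * \<phi> j z) (\<lambda>z. \<Sum>j\<in>S. c j * \<phi> j z)
     = (\<Sum>j\<in>S. c j * l2ip M (\<phi> j) (\<lambda>z. \<Sum>i\<in>S. c i * \<phi> i z))"
    by (rule ip_sum1[OF assms]) (auto intro!: continuous_intros)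
  also have "\<dots> = (\<Sum>j\<in>S. c j * (\<Sum>i\<in>S. cnj (c i) * l2ip M (\<phi> j) (\<phi> i)))"
    by (intro sum.cong refl arg_cong2[where f="(*)"] ip_sum2[OF assms]) (auto intro!: continuous_intros)
  also have "\<dots> = (\<Sum>j\<in>S. c j * cnj (c j))"
    using assms by (simp add: orth if_distrib sum.If_cases cong: if_cong)
  also have "\<dots> = of_real (\<Sum>j\<in>S. (cmod (c j))\<^sup>2)"
    by (simp only: of_real_sum complex_norm_square)
  finally show ?thesis .
qed

end


context hm begin

definition RR :: "complex set" where
  "RR = {l2ip M (\<lambda>z. z * poly q z) (poly q) / l2ip M (poly q) (poly q) | q. q \<noteq> 0}"

lemma hess_sub_R: "hess_numrange M \<subseteq> RR"
proof
  fix x assume "x \<in> hess_numrange M"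
  then obtain v S where x: "x = (\<Sum>i\<in>S. \<Sum>j\<in>S. v i * hessenberg M i j * cnj (v j))"
    and S: "finite S" "\<forall>i. i \<notin> S \<longrightarrow> v i = 0" "(\<Sum>i\<in>S. (cmod (v i))\<^sup>2) = 1"
    unfolding hess_numrange_def by blast
  define c where "c j = cnj (v j)" for j
  define P where "P j = (SOME q. \<phi> j = poly q \<and> degree q \<le> j)" for j
  have P: "\<phi> j = poly (P j)" for j unfolding P_def using someI_ex[OF phi_poly[of j]] by blast
  define q where "q = (\<Sum>j\<in>S. smult (c j) (P j))"
  have pq: "poly q = (\<lambda>z. \<Sum>j\<in>S. c j * \<phi> j z)" unfolding q_def by (auto simp: poly_sum P)
  have N: "l2ip M (poly q) (poly q) = 1" unfolding pq quadN[OF S(1)] using S(3) by (simp add: c_def)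
  have q0: "q \<noteq> 0"
  proof
    assume "q = 0"
    hence "l2ip M (poly q) (poly q) = 0" by (simp add: l2ip_def)
    thus False using N by simp
  qed
  have "x = l2ip M (\<lambda>z. z * poly q z) (poly q) / l2ip M (poly q) (poly q)"
    unfolding N unfolding pq quadQ[OF S(1)] x c_def by (simp add: mult_ac)
  thus "x \<in> RR" unfolding RR_def using q0 by blast
qed

lemma R_sub_hess: "RR \<subseteq> hess_numrange M"
proof
  fix x assume "x \<in> RR"
  then obtain q where q0: "q \<noteq> 0" and x: "x = l2ip M (\<lambda>z. z * poly q z) (poly q) / l2ip M (poly q) (poly q)"
    unfolding RR_def by blast
  obtain d where d: "\<And>z. poly q z = (\<Sum>j\<le>degree q. d j * \<phi> j z)" using span_poly by blast
  define S where "S = {..degree q}"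
  have pq: "poly q = (\<lambda>z. \<Sum>j\<in>S. d j * \<phi> j z)" using d unfolding S_def by auto
  have fS: "finite S" unfolding S_def by simp
  define n0 where "n0 = (\<Sum>j\<in>S. (cmod (d j))\<^sup>2)"
  have N: "l2ip M (poly q) (poly q) = of_real n0" unfolding pq quadN[OF fS] n0_def ..
  have n0: "n0 > 0" using poly_pos[OF q0] N by simp
  define r where "r = sqrt n0"
  have r: "r > 0" "r\<^sup>2 = n0" using n0 unfolding r_def by auto
  define v where "v j = (if j \<in> S then cnj (d j) / of_real r else 0)" for j
  have v1: "(\<Sum>i\<in>S. (cmod (v i))\<^sup>2) = 1"
  proof -
    have "(\<Sum>i\<in>S. (cmod (v i))\<^sup>2) = (\<Sum>i\<in>S. (cmod (d i))\<^sup>2 / r\<^sup>2)"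
      unfolding v_def using r by (intro sum.cong) (auto simp: norm_divide power_divide)
    also have "\<dots> = 1" using r n0 unfolding n0_def by (simp add: sum_divide_distrib[symmetric])
    finally show ?thesis .
  qed
  have v0: "\<forall>i. i \<notin> S \<longrightarrow> v i = 0" unfolding v_def by auto
  have "x = (\<Sum>i\<in>S. \<Sum>j\<in>S. cnj (d i) * hessenberg M i j * d j) / of_real (r\<^sup>2)"
    unfolding x N unfolding pq quadQ[OF fS] using r by simp
  also have "\<dots> = (\<Sum>i\<in>S. \<Sum>j\<in>S. v i * hessenberg M i j * cnj (v j))"
  proof -
    have rr: "complex_of_real r * complex_of_real r = complex_of_real n0"
      using r by (simp flip: of_real_mult add: power2_eq_square)
    show ?thesis unfolding v_def using r
      by (simp add: sum_divide_distrib power2_eq_square field_simps rr cong: sum.cong)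
  qed
  finally show "x \<in> hess_numrange M" unfolding hess_numrange_def using fS v0 v1 by blast
qed

lemma sec_eq: "(\<Union>n. section_numrange M n) = hess_numrange M"
proof
  show "(\<Union>n. section_numrange M n) \<subseteq> hess_numrange M"
  proof
    fix x assume "x \<in> (\<Union>n. section_numrange M n)"
    then obtain n v where x: "x = (\<Sum>i\<le>n. \<Sum>j\<le>n. v i * hessenberg M i j * cnj (v j))"
      and v: "(\<Sum>i\<le>n. (cmod (v i))\<^sup>2) = 1" unfolding section_numrange_def by blast
    define w where "w i = (if i \<le> n then v i else 0)" for i
    have "x = (\<Sum>i\<in>{..n}. \<Sum>j\<in>{..n}. w i * hessenberg M i j * cnj (w j))"
      unfolding x w_def by simp
    moreover have "(\<Sum>i\<in>{..n}. (cmod (w i))\<^sup>2) = 1" using v unfolding w_def by simp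
    moreover have "\<forall>i. i \<notin> {..n} \<longrightarrow> w i = 0" unfolding w_def by simp
    ultimately show "x \<in> hess_numrange M" unfolding hess_numrange_def by blast
  qed
next
  show "hess_numrange M \<subseteq> (\<Union>n. section_numrange M n)"
  proof
    fix x assume "x \<in> hess_numrange M"
    then obtain v S where x: "x = (\<Sum>i\<in>S. \<Sum>j\<in>S. v i * hessenberg M i j * cnj (v j))"
      and S: "finite S" "\<forall>i. i \<notin> S \<longrightarrow> v i = 0" "(\<Sum>i\<in>S. (cmod (v i))\<^sup>2) = 1"
      unfolding hess_numrange_def by blast
    define n where "n = Max S"
    have sub: "S \<subseteq> {..n}" unfolding n_def using S(1) by auto
    have e1: "(\<Sum>i\<in>S. (cmod (v i))\<^sup>2) = (\<Sum>i\<le>n. (cmod (v i))\<^sup>2)"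
      by (rule sum.mono_neutral_left) (use sub S in auto)
    have e2: "(\<Sum>j\<in>S. v i * hessenberg M i j * cnj (v j)) = (\<Sum>j\<le>n. v i * hessenberg M i j * cnj (v j))" for i
      by (rule sum.mono_neutral_left) (use sub S in auto)
    have e3: "(\<Sum>i\<in>S. \<Sum>j\<le>n. v i * hessenberg M i j * cnj (v j)) = (\<Sum>i\<le>n. \<Sum>j\<le>n. v i * hessenberg M i j * cnj (v j))"
      by (rule sum.mono_neutral_left) (use sub S in auto)
    have "x \<in> section_numrange M n" unfolding section_numrange_def x e2 e3
      using S(3) e1 by auto
    thus "x \<in> (\<Union>n. section_numrange M n)" by blast
  qed
qed

end


context hm begin

lemma Qre:
  assumes "continuous_on UNIV f"
  shows "Re (cnj a * l2ip M (\<lambda>z. z * f z) f) = (\<integral>z. Re (cnj a * z) * (cmod (f z))\<^sup>2 \<partial>M)"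
proof -
  define G where "G = (\<lambda>z. cnj a * (z * of_real ((cmod (f z))\<^sup>2)))"
  have e: "(\<lambda>z. z * f z * cnj (f z)) = (\<lambda>z. z * of_real ((cmod (f z))\<^sup>2))"
    by (rule ext) (metis complex_norm_square mult.assoc)
  have int: "integrable M G" unfolding G_def
    by (intro int_cont continuous_intros assms)
  have h1: "cnj a * l2ip M (\<lambda>z. z * f z) f = integral\<^sup>L M G"
    unfolding l2ip_def e G_def by (rule integral_mult_right_zero[symmetric])
  have h2: "integral\<^sup>L M (\<lambda>z. Re (G z)) = Re (integral\<^sup>L M G)"
    by (rule integral_bounded_linear[OF bounded_linear_Re int])
  have h3: "Re (G z) = Re (cnj a * z) * (cmod (f z))\<^sup>2" for z
    unfolding G_def by (simp add: mult.assoc[symmetric] del: of_real_power)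
  show ?thesis by (simp only: h1 h2[symmetric] h3)
qed

lemma Nre: "Re (l2ip M f f) = (\<integral>z. (cmod (f z))\<^sup>2 \<partial>M)"
  unfolding ip_self by simp

lemma inner_Re: "inner a (z::complex) = Re (cnj a * z)"
  by (simp add: inner_complex_def)

lemma R_sub_hull: "RR \<subseteq> convex hull K"
proof
  fix x assume "x \<in> RR"
  then obtain q where q0: "q \<noteq> 0" and x: "x = l2ip M (\<lambda>z. z * poly q z) (poly q) / l2ip M (poly q) (poly q)"
    unfolding RR_def by blast
  define n where "n = Re (l2ip M (poly q) (poly q))"
  have n: "n > 0" using poly_pos[OF q0] unfolding n_def .
  have N: "l2ip M (poly q) (poly q) = of_real n" unfolding n_def by (rule ip_real)
  show "x \<in> convex hull K"
  proof (rule ccontr)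
    assume "x \<notin> convex hull K"
    moreover have "convex (convex hull K)" "closed (convex hull K)"
      using compact_convex_hull[OF cK] compact_imp_closed by auto
    ultimately obtain a b where ab: "inner a x < b" "\<forall>y\<in>convex hull K. inner a y > b"
      using separating_hyperplane_closed_point by blast
    have i1: "inner a x = Re (cnj a * l2ip M (\<lambda>z. z * poly q z) (poly q)) / n"
      unfolding inner_Re x N by (simp add: Re_divide_of_real)
    have i2: "Re (cnj a * l2ip M (\<lambda>z. z * poly q z) (poly q)) = (\<integral>z. Re (cnj a * z) * (cmod (poly q z))\<^sup>2 \<partial>M)"
      by (rule Qre) (auto intro!: continuous_intros)
    have "(\<integral>z. Re (cnj a * z) * (cmod (poly q z))\<^sup>2 \<partial>M) \<ge> (\<integral>z. b * (cmod (poly q z))\<^sup>2 \<partial>M)"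
    proof (rule integral_mono_AE)
      show "integrable M (\<lambda>z. b * (cmod (poly q z))\<^sup>2)" "integrable M (\<lambda>z. Re (cnj a * z) * (cmod (poly q z))\<^sup>2)"
        by (auto intro!: int_cont continuous_intros)
      show "AE z in M. b * (cmod (poly q z))\<^sup>2 \<le> Re (cnj a * z) * (cmod (poly q z))\<^sup>2"
        using AE_K
      proof eventually_elim
        case (elim z)
        hence "inner a z > b" using ab(2) hull_inc[of z K] by blast
        thus ?case unfolding inner_Re by (intro mult_right_mono) auto
      qed
    qed
    hence "(\<integral>z. Re (cnj a * z) * (cmod (poly q z))\<^sup>2 \<partial>M) \<ge> b * n"
      unfolding n_def Nre by simp
    hence "inner a x \<ge> b" unfolding i1 i2 using n by (simp add: le_divide_eq)
    thus False using ab(1) by simp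
  qed
qed

end


context hm begin

lemma ip_exp:
  assumes "continuous_on UNIV f" "continuous_on UNIV g" "continuous_on UNIV h" "continuous_on UNIV k"
  shows "l2ip M (\<lambda>z. A * f z + B * g z) (\<lambda>z. A * h z + B * k z) =
    A * cnj A * l2ip M f h + A * cnj B * l2ip M f k + B * cnj A * l2ip M g h + B * cnj B * l2ip M g k"
proof -
  have c: "continuous_on UNIV (\<lambda>z. A * h z + B * k z)" by (intro continuous_intros assms)
  show ?thesis
    unfolding ip_lin1[OF assms(1,2) c] ip_lin2[OF assms(3,4) assms(1)] ip_lin2[OF assms(3,4) assms(2)]
    by (simp add: algebra_simps)
qed

lemma im_omega:
  fixes \<eta> :: complex
  defines "\<omega> \<equiv> (if \<eta> = 0 then 1 else cnj \<eta> / of_real (cmod \<eta>))"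
  shows "Im (\<omega> * \<eta>) = 0" "\<omega> * cnj \<omega> = 1"
proof -
  show "Im (\<omega> * \<eta>) = 0"
  proof (cases "\<eta> = 0")
    case False
    have cc: "cnj \<eta> * \<eta> = of_real ((cmod \<eta>)\<^sup>2)" using complex_norm_square[of \<eta>] by (simp add: mult.commute del: of_real_power)
    have "\<omega> * \<eta> = (cnj \<eta> * \<eta>) / of_real (cmod \<eta>)"
      using False unfolding \<omega>_def by (simp add: field_simps)
    also have "\<dots> = of_real ((cmod \<eta>)\<^sup>2 / cmod \<eta>)" unfolding cc by simp
    finally have "\<omega> * \<eta> = of_real ((cmod \<eta>)\<^sup>2 / cmod \<eta>)" .
    thus ?thesis by simp
  qed (simp add: \<omega>_def)
  show "\<omega> * cnj \<omega> = 1"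
  proof (cases "\<eta> = 0")
    case False
    have "\<omega> * cnj \<omega> = (\<eta> * cnj \<eta>) / of_real ((cmod \<eta>)\<^sup>2)"
      using False unfolding \<omega>_def by (simp add: power2_eq_square mult_ac)
    also have "\<dots> = 1" using False by (simp only: complex_norm_square[symmetric]) simp
    finally show ?thesis .
  qed (simp add: \<omega>_def)
qed

lemma scale_same:
  assumes "c \<noteq> 0"
  shows "l2ip M (\<lambda>z. z * (c * f z)) (\<lambda>z. c * f z) / l2ip M (\<lambda>z. c * f z) (\<lambda>z. c * f z)
       = l2ip M (\<lambda>z. z * f z) f / l2ip M f f"
proof -
  have e: "(\<lambda>z. z * (c * f z)) = (\<lambda>z. c * (z * f z))" by (simp add: mult_ac)
  show ?thesis unfolding e ip_smul1 ip_smul2 using assms by simp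
qed

lemma seg:
  assumes q1: "q1 \<noteq> 0" and q2: "q2 \<noteq> 0" and t: "0 \<le> t" "t \<le> 1"
  defines "x1 \<equiv> l2ip M (\<lambda>z. z * poly q1 z) (poly q1) / l2ip M (poly q1) (poly q1)"
  defines "x2 \<equiv> l2ip M (\<lambda>z. z * poly q2 z) (poly q2) / l2ip M (poly q2) (poly q2)"
  shows "x1 + of_real t * (x2 - x1) \<in> RR"
proof (cases "x1 = x2")
  case True
  thus ?thesis unfolding RR_def x1_def using q1 by auto
next
  case False
  define d where "d = x2 - x1"
  have d: "d \<noteq> 0" using False unfolding d_def by simp
  define p1 where "p1 = poly q1"
  define p2 where "p2 = poly q2"
  have cp: "continuous_on UNIV p1" "continuous_on UNIV p2"
     "continuous_on UNIV (\<lambda>z. z * p1 z)" "continuous_on UNIV (\<lambda>z. z * p2 z)"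
    unfolding p1_def p2_def by (auto intro!: continuous_intros)
  define Q11 where "Q11 = l2ip M (\<lambda>z. z * p1 z) p1"
  define Q12 where "Q12 = l2ip M (\<lambda>z. z * p1 z) p2"
  define Q21 where "Q21 = l2ip M (\<lambda>z. z * p2 z) p1"
  define Q22 where "Q22 = l2ip M (\<lambda>z. z * p2 z) p2"
  define N11 where "N11 = l2ip M p1 p1"
  define N12 where "N12 = l2ip M p1 p2"
  define N21 where "N21 = l2ip M p2 p1"
  define N22 where "N22 = l2ip M p2 p2"
  define n1 where "n1 = Re N11"
  define n2 where "n2 = Re N22"
  have n1: "n1 > 0" "N11 = of_real n1" unfolding n1_def N11_def p1_def using poly_pos[OF q1] ip_real by auto
  have n2: "n2 > 0" "N22 = of_real n2" unfolding n2_def N22_def p2_def using poly_pos[OF q2] ip_real by auto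
  have Q11: "Q11 = x1 * N11" unfolding x1_def Q11_def N11_def p1_def using n1 unfolding N11_def p1_def by simp
  have Q22: "Q22 = x2 * N22" unfolding x2_def Q22_def N22_def p2_def using n2 unfolding N22_def p2_def by simp
  define \<beta> where "\<beta> = (Q12 - x1 * N12) / d"
  define \<gamma> where "\<gamma> = (Q21 - x1 * N21) / d"
  define \<eta> where "\<eta> = \<gamma> - cnj \<beta>"
  define \<omega> where "\<omega> = (if \<eta> = 0 then 1 else cnj \<eta> / of_real (cmod \<eta>))"
  have om: "Im (\<omega> * \<eta>) = 0" "\<omega> * cnj \<omega> = 1" unfolding \<omega>_def using im_omega by auto
  define A where "A s = complex_of_real (1 - s)" for s
  define B where "B s = complex_of_real s * \<omega>" for s
  define Qe where "Qe s = A s * cnj (A s) * Q11 + A s * cnj (B s) * Q12 + B s * cnj (A s) * Q21 + B s * cnj (B s) * Q22" for s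
  define Ne where "Ne s = A s * cnj (A s) * N11 + A s * cnj (B s) * N12 + B s * cnj (A s) * N21 + B s * cnj (B s) * N22" for s
  define Be where "Be s = (Qe s - x1 * Ne s) / d" for s
  define fs where "fs s = (\<lambda>z. A s * p1 z + B s * p2 z)" for s
  define qs where "qs s = smult (A s) q1 + smult (B s) q2" for s
  have pqs: "poly (qs s) = fs s" for s unfolding qs_def fs_def p1_def p2_def by auto
  have Qfs: "l2ip M (\<lambda>z. z * fs s z) (fs s) = Qe s" for s
  proof -
    have "(\<lambda>z. z * fs s z) = (\<lambda>z. A s * (z * p1 z) + B s * (z * p2 z))"
      unfolding fs_def by (simp add: algebra_simps)
    thus ?thesis unfolding Qe_def Q11_def Q12_def Q21_def Q22_def fs_def
      using ip_exp[OF cp(3,4,1,2)] by simp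
  qed
  have Nfs: "l2ip M (fs s) (fs s) = Ne s" for s
    unfolding Ne_def N11_def N12_def N21_def N22_def fs_def using ip_exp[OF cp(1,2,1,2)] by simp
  have Be_eq: "Be s = A s * cnj (B s) * \<beta> + B s * cnj (A s) * \<gamma> + B s * cnj (B s) * N22" for s
  proof -
    have "Qe s - x1 * Ne s = A s * cnj (A s) * (Q11 - x1 * N11) + A s * cnj (B s) * (Q12 - x1 * N12)
       + B s * cnj (A s) * (Q21 - x1 * N21) + B s * cnj (B s) * (Q22 - x1 * N22)"
      unfolding Qe_def Ne_def by (simp add: algebra_simps)
    also have "Q11 - x1 * N11 = 0" using Q11 by simp
    also have "Q22 - x1 * N22 = d * N22" using Q22 unfolding d_def by (simp add: algebra_simps)
    finally have E: "Qe s - x1 * Ne s = A s * cnj (A s) * 0 + A s * cnj (B s) * (Q12 - x1 * N12)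
       + B s * cnj (A s) * (Q21 - x1 * N21) + B s * cnj (B s) * (d * N22)" .
    show ?thesis unfolding Be_def E \<beta>_def \<gamma>_def using d by (simp add: add_divide_distrib)
  qed
  have Be_real: "Im (Be s) = 0" for s
  proof -
    have "Be s = of_real (s * (1 - s)) * (cnj \<omega> * \<beta> + \<omega> * \<gamma>) + of_real (s\<^sup>2) * (\<omega> * cnj \<omega>) * N22"
      unfolding Be_eq A_def B_def by (simp add: algebra_simps power2_eq_square)
    also have "cnj \<omega> * \<beta> + \<omega> * \<gamma> = \<omega> * \<eta> + (\<omega> * cnj \<beta> + cnj (\<omega> * cnj \<beta>))"
      unfolding \<eta>_def by (simp add: algebra_simps)
    finally show ?thesis using om n2(2) by simp
  qed
  have Ne_real: "Ne s = of_real (Re (Ne s))" for s using ip_real[of "fs s"] unfolding Nfs .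
  have qs0: "qs s \<noteq> 0" if "0 \<le> s" "s \<le> 1" for s
  proof
    assume z: "qs s = 0"
    have s0: "s \<noteq> 0"
    proof
      assume "s = 0"
      hence "qs s = q1" unfolding qs_def A_def B_def by simp
      thus False using z q1 by simp
    qed
    have B0: "B s \<noteq> 0" unfolding B_def using s0 om(2) by auto
    define c where "c = - A s / B s"
    have q2c: "q2 = smult c q1"
    proof -
      have "smult (B s) q2 = - smult (A s) q1" using z unfolding qs_def by (simp add: add_eq_0_iff)
      hence "smult (inverse (B s)) (smult (B s) q2) = smult (inverse (B s)) (- smult (A s) q1)" by simp
      thus ?thesis using B0 unfolding c_def by (simp add: field_simps)
    qed
    have c0: "c \<noteq> 0" using q2 q2c by auto
    have "p2 = (\<lambda>z. c * p1 z)" unfolding p2_def p1_def q2c by auto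
    hence "x2 = x1" unfolding x2_def x1_def p2_def[symmetric] p1_def[symmetric]
      using scale_same[OF c0, of p1] by simp
    thus False using False by simp
  qed
  have Npos: "Re (Ne s) > 0" if "0 \<le> s" "s \<le> 1" for s
    using poly_pos[OF qs0[OF that]] unfolding pqs Nfs .
  define h where "h s = Re (Be s) / Re (Ne s)" for s
  have cQ: "continuous_on {0..1} Qe" unfolding Qe_def A_def B_def by (intro continuous_intros)
  have cN: "continuous_on {0..1} Ne" unfolding Ne_def A_def B_def by (intro continuous_intros)
  have cB: "continuous_on {0..1} (\<lambda>s. Re (Be s))" unfolding Be_def
    by (intro continuous_intros cQ cN) (use d in auto)
  have cN': "continuous_on {0..1} (\<lambda>s. Re (Ne s))" by (intro continuous_intros cN)
  have hcont: "continuous_on {0..1} h"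
    unfolding h_def by (rule continuous_on_divide[OF cB cN']) (use Npos in force)
  have h0: "h 0 = 0"
    unfolding h_def Be_eq by (simp add: A_def B_def)
  have h1: "h 1 = 1"
  proof -
    have "Be 1 = N22" unfolding Be_eq A_def B_def using om(2) by simp
    moreover have "Ne 1 = N22" unfolding Ne_def A_def B_def using om(2) by simp
    ultimately show ?thesis unfolding h_def using n2 by simp
  qed
  obtain s where s: "0 \<le> s" "s \<le> 1" "h s = t"
    using IVT'[of h 0 t 1] hcont t h0 h1 by auto
  have "x1 + of_real t * (x2 - x1) = Qe s / Ne s"
  proof -
    have Qe: "Qe s = d * Be s + x1 * Ne s" unfolding Be_def using d by simp
    have "Be s / Ne s = of_real t"
      using Be_real[of s] Ne_real[of s] s(3) unfolding h_def
      by (metis complex_eq_iff of_real_divide zero_complex.sel(2) complex_of_real_def Re_complex_of_real Im_complex_of_real)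
    moreover have "Ne s \<noteq> 0" using Npos[OF s(1,2)] by auto
    ultimately show ?thesis unfolding Qe d_def by (simp add: field_simps)
  qed
  also have "\<dots> = l2ip M (\<lambda>z. z * poly (qs s) z) (poly (qs s)) / l2ip M (poly (qs s)) (poly (qs s))"
    unfolding pqs Qfs Nfs ..
  finally show ?thesis unfolding RR_def using qs0[OF s(1,2)] by blast
qed

lemma convex_RR: "convex RR"
proof (rule convexI)
  fix x y :: complex and u v :: real
  assume xy: "x \<in> RR" "y \<in> RR" and uv: "0 \<le> u" "0 \<le> v" "u + v = 1"
  obtain q1 where q1: "q1 \<noteq> 0" "x = l2ip M (\<lambda>z. z * poly q1 z) (poly q1) / l2ip M (poly q1) (poly q1)"
    using xy(1) unfolding RR_def by blast
  obtain q2 where q2: "q2 \<noteq> 0" "y = l2ip M (\<lambda>z. z * poly q2 z) (poly q2) / l2ip M (poly q2) (poly q2)"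
    using xy(2) unfolding RR_def by blast
  have "x + of_real v * (y - x) \<in> RR" unfolding q1(2) q2(2) by (rule seg[OF q1(1) q2(1)]) (use uv in auto)
  moreover have "x + of_real v * (y - x) = u *\<^sub>R x + v *\<^sub>R y"
  proof -
    have u: "u = 1 - v" using uv by simp
    show ?thesis unfolding u scaleR_conv_of_real by (simp add: algebra_simps)
  qed
  ultimately show "u *\<^sub>R x + v *\<^sub>R y \<in> RR" by simp
qed

end


lemma half_cancel: "(y::real) > 0 \<Longrightarrow> y * (z / (2 * y)) * w = z / 2 * w"
  by (simp add: field_simps)

lemma wsq: "(cmod (1 - complex_of_real e * t))\<^sup>2 = 1 - 2 * e * Re t + e\<^sup>2 * (cmod t)\<^sup>2"
  by (simp only: cmod_power2) (simp add: power2_eq_square algebra_simps)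

context hm begin

lemma hull_sub: "convex hull K \<subseteq> closure RR"
proof
  fix y assume yK: "y \<in> convex hull K"
  show "y \<in> closure RR"
  proof (rule ccontr)
    assume ny: "y \<notin> closure RR"
    obtain a b where ab: "inner a y < b" "\<forall>x\<in>closure RR. inner a x > b"
      using separating_hyperplane_closed_point[OF convex_closure[OF convex_RR] closed_closure ny] by blast
    define g where "g z = Re (cnj a * z)" for z
    have gcont: "continuous_on UNIV g" unfolding g_def by (intro continuous_intros)
    have Kne: "K \<noteq> {}" using iK by auto
    obtain z0 where z0: "z0 \<in> K" "\<And>z. z \<in> K \<Longrightarrow> g z0 \<le> g z"
      using continuous_attains_inf[OF cK Kne continuous_on_subset[OF gcont]] by blast
    define m where "m = g z0"
    have cvh: "convex {x. inner a x \<ge> m}" by (rule convex_halfspace_ge)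
    have "convex hull K \<subseteq> {x. inner a x \<ge> m}"
      by (rule hull_minimal[where S=convex, OF _ cvh]) (use z0 in \<open>auto simp: m_def g_def inner_Re\<close>)
    hence "m \<le> g y" using yK unfolding g_def inner_Re by auto
    hence \<delta>: "b - m > 0" using ab(1) unfolding g_def inner_Re by simp
    define \<delta> where "\<delta> = b - m"
    have dpos: "\<delta> > 0" using \<delta> unfolding \<delta>_def .
    obtain Bn where Bn: "\<And>z. z \<in> K \<Longrightarrow> cmod z \<le> Bn"
      using compact_imp_bounded[OF cK] unfolding bounded_iff by blast
    have Bn0: "Bn \<ge> 0" using Bn[OF z0(1)] norm_ge_zero[of z0] by linarith
    define Bt where "Bt = cmod a * (Bn + cmod z0) + 1"
    have Bt0: "Bt > 0" unfolding Bt_def using Bn0 by (simp add: add_nonneg_pos)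
    have tB: "cmod (cnj a * (z - z0)) \<le> Bt" if "z \<in> K" for z
    proof -
      have "cmod (z - z0) \<le> Bn + cmod z0" using Bn[OF that] norm_triangle_ineq4[of z z0] by linarith
      hence "cmod (cnj a * (z - z0)) \<le> cmod a * (Bn + cmod z0)"
        by (simp add: norm_mult mult_left_mono)
      thus ?thesis unfolding Bt_def by simp
    qed
    define G where "G = cmod a * Bn + \<bar>b\<bar>"
    have G0: "G \<ge> 0" unfolding G_def using Bn0 by simp
    have gG: "g z - b \<le> G" if "z \<in> K" for z
    proof -
      have "g z \<le> cmod (cnj a * z)" unfolding g_def by (rule complex_Re_le_cmod)
      also have "\<dots> \<le> cmod a * Bn" using Bn[OF that] by (simp add: norm_mult mult_left_mono)
      finally show ?thesis unfolding G_def by simp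
    qed
    define X where "X = Bt\<^sup>2 + \<delta>\<^sup>2"
    have X0: "X > 0" unfolding X_def using dpos by (intro add_nonneg_pos) auto
    define \<epsilon> where "\<epsilon> = \<delta> / (2 * X)"
    have epos: "\<epsilon> > 0" unfolding \<epsilon>_def using dpos X0 by simp
    have eB: "\<epsilon> * Bt\<^sup>2 \<le> \<delta> / 2"
    proof -
      have "\<epsilon> * Bt\<^sup>2 = \<delta> * Bt\<^sup>2 / (2 * X)" unfolding \<epsilon>_def by simp
      also have "\<dots> \<le> \<delta> * X / (2 * X)"
        using dpos X0 unfolding X_def by (intro divide_right_mono mult_left_mono) auto
      also have "\<dots> = \<delta> / 2" using X0 by simp
      finally show ?thesis .
    qed
    have ed: "\<epsilon> * \<delta> \<le> 1 / 2"
    proof -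
      have "\<epsilon> * \<delta> = \<delta>\<^sup>2 / (2 * X)" unfolding \<epsilon>_def by (simp add: power2_eq_square)
      also have "\<dots> \<le> X / (2 * X)" using X0 unfolding X_def
        by (intro divide_right_mono) auto
      also have "\<dots> = 1 / 2" using X0 by simp
      finally show ?thesis .
    qed
    define L where "L = 1 - \<epsilon> * \<delta>"
    define U where "U = 1 - 3 / 2 * (\<epsilon> * \<delta>)"
    have L0: "L > 0" and U0: "U > 0" and UL: "U < L"
      unfolding L_def U_def using ed epos dpos by (auto simp: mult_pos_pos)
    define r where "r = \<delta> / (2 * (cmod a + 1))"
    have r0: "r > 0" unfolding r_def using dpos by (simp add: add_nonneg_pos)
    have ball_g: "g z - m < \<delta> / 2" if "z \<in> ball z0 r" for z
    proof -
      have "g z - m = Re (cnj a * (z - z0))" unfolding g_def m_def by (simp add: algebra_simps)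
      also have "\<dots> \<le> cmod a * cmod (z - z0)" using complex_Re_le_cmod[of "cnj a * (z - z0)"] by (simp add: norm_mult)
      also have "\<dots> \<le> cmod a * r" using that by (intro mult_left_mono) (auto simp: dist_norm norm_minus_commute)
      also have "\<dots> < \<delta> / 2"
      proof -
        have "cmod a * r = \<delta> / 2 * (cmod a / (cmod a + 1))" unfolding r_def by (simp add: field_simps)
        also have "\<dots> < \<delta> / 2 * 1" using dpos by (intro mult_strict_left_mono) (auto simp: divide_less_eq add_nonneg_pos)
        finally show ?thesis by simp
      qed
      finally show ?thesis .
    qed
    define \<mu>A where "\<mu>A = measure M (ball z0 r)"
    define \<mu>T where "\<mu>T = measure M (space M)"
    have muA: "\<mu>A > 0" unfolding \<mu>A_def by (rule meas_ball_pos[OF z0(1) r0])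
    have muT: "\<mu>T \<ge> 0" unfolding \<mu>T_def by simp
    obtain N where N: "(U / L) ^ N < \<delta> * \<mu>A / (2 * (G * \<mu>T + 1))"
      using real_arch_pow_inv[of "\<delta> * \<mu>A / (2 * (G * \<mu>T + 1))" "U / L"] dpos muA G0 muT UL L0
      by (auto simp: add_nonneg_pos)
    define w where "w z = 1 - complex_of_real \<epsilon> * (cnj a * (z - z0))" for z
    define q where "q = [:1 + complex_of_real \<epsilon> * cnj a * z0, - complex_of_real \<epsilon> * cnj a:] ^ N"
    have pq: "poly q z = w z ^ N" for z unfolding q_def w_def by (simp add: algebra_simps)
    have p2: "(cmod (poly q z))\<^sup>2 = ((cmod (w z))\<^sup>2) ^ N" for z
      unfolding pq by (simp add: norm_power power_mult[symmetric] mult.commute)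
    have w2: "(cmod (w z))\<^sup>2 = 1 - 2 * \<epsilon> * (g z - m) + \<epsilon>\<^sup>2 * (cmod (cnj a * (z - z0)))\<^sup>2" for z
    proof -
      have "Re (cnj a * (z - z0)) = g z - m" unfolding g_def m_def by (simp add: algebra_simps)
      thus ?thesis unfolding w_def wsq by simp
    qed
    have lowA: "(cmod (poly q z))\<^sup>2 \<ge> L ^ N" if "z \<in> ball z0 r" for z
    proof -
      have "(cmod (w z))\<^sup>2 \<ge> 1 - 2 * \<epsilon> * (g z - m)" unfolding w2 by simp
      moreover have "1 - 2 * \<epsilon> * (g z - m) \<ge> L"
      proof -
        have "2 * (g z - m) \<le> \<delta>" using ball_g[OF that] by simp
        hence "\<epsilon> * (2 * (g z - m)) \<le> \<epsilon> * \<delta>" using epos by (intro mult_left_mono) auto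
        thus ?thesis unfolding L_def by (simp add: algebra_simps)
      qed
      ultimately have "(cmod (w z))\<^sup>2 \<ge> L" by simp
      thus ?thesis unfolding p2 using L0 by (intro power_mono) auto
    qed
    have upp: "(cmod (poly q z))\<^sup>2 \<le> U ^ N" if "z \<in> K" "g z \<ge> b" for z
    proof -
      have "\<epsilon>\<^sup>2 * (cmod (cnj a * (z - z0)))\<^sup>2 \<le> \<epsilon>\<^sup>2 * Bt\<^sup>2"
        using tB[OF that(1)] by (intro mult_left_mono power_mono) auto
      also have "\<dots> = \<epsilon> * (\<epsilon> * Bt\<^sup>2)" by (simp add: power2_eq_square)
      also have "\<dots> \<le> \<epsilon> * (\<delta> / 2)" using eB epos by (intro mult_left_mono) auto
      finally have a1: "\<epsilon>\<^sup>2 * (cmod (cnj a * (z - z0)))\<^sup>2 \<le> \<epsilon> * (\<delta> / 2)" .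
      have "g z - m \<ge> \<delta>" using that(2) \<delta>_def by linarith
      hence a2: "2 * \<epsilon> * (g z - m) \<ge> 2 * \<epsilon> * \<delta>" using epos by (intro mult_left_mono) auto
      have "(cmod (w z))\<^sup>2 \<le> U" unfolding w2 U_def using a1 a2 by simp
      thus ?thesis unfolding p2 by (intro power_mono) auto
    qed
    define F where "F z = (g z - b) * (cmod (poly q z))\<^sup>2" for z
    define H where "H z = - (\<delta> / 2) * L ^ N * indicator (ball z0 r) z + G * U ^ N" for z
    have FH: "AE z in M. F z \<le> H z"
      using AE_K
    proof eventually_elim
      case (elim z)
      have GU: "G * U ^ N \<ge> 0" using G0 U0 by simp
      show ?case
      proof (cases "z \<in> ball z0 r")
        case True
        have "g z - b \<le> - (\<delta> / 2)" using ball_g[OF True] \<delta>_def by linarith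
        hence "F z \<le> - (\<delta> / 2) * (cmod (poly q z))\<^sup>2" unfolding F_def by (intro mult_right_mono) auto
        also have "\<dots> \<le> - (\<delta> / 2) * L ^ N" using lowA[OF True] dpos by simp
        finally show ?thesis unfolding H_def using True GU by simp
      next
        case False
        show ?thesis
        proof (cases "g z \<ge> b")
          case True
          have "F z \<le> G * (cmod (poly q z))\<^sup>2" unfolding F_def using gG[OF elim] by (intro mult_right_mono) auto
          also have "\<dots> \<le> G * U ^ N" using upp[OF elim True] G0 by (intro mult_left_mono) auto
          finally show ?thesis unfolding H_def using False by simp
        next
          case nb: False
          have "F z \<le> 0" unfolding F_def using nb by (intro mult_nonpos_nonneg) auto
          thus ?thesis unfolding H_def using False GU by simp
        qed
      qed
    qed
    have iP: "integrable M (\<lambda>z. (cmod (poly q z))\<^sup>2)" by (intro int_cont continuous_intros)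
    have iGP: "integrable M (\<lambda>z. g z * (cmod (poly q z))\<^sup>2)" unfolding g_def by (intro int_cont continuous_intros)
    have iF: "integrable M F" unfolding F_def g_def by (intro int_cont continuous_intros)
    have iI: "integrable M (indicator (ball z0 r) :: complex \<Rightarrow> real)"
      using open_sets[of "ball z0 r"] finite_measure.emeasure_eq_measure[OF fin]
      by (simp add: finite_measure.integrable_const[OF fin])
    have iH: "integrable M H" unfolding H_def
      by (rule Bochner_Integration.integrable_add[OF integrable_mult_right[OF iI] finite_measure.integrable_const[OF fin]])
    have intH: "integral\<^sup>L M H = - (\<delta> / 2) * L ^ N * \<mu>A + G * U ^ N * \<mu>T"
    proof -
      have "integral\<^sup>L M H = integral\<^sup>L M (\<lambda>z. - (\<delta> / 2) * L ^ N * indicator (ball z0 r) z) + integral\<^sup>L M (\<lambda>z. G * U ^ N)"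
        unfolding H_def by (rule Bochner_Integration.integral_add[OF integrable_mult_right[OF iI] finite_measure.integrable_const[OF fin]])
      also have "integral\<^sup>L M (\<lambda>z. - (\<delta> / 2) * L ^ N * indicator (ball z0 r) z) = - (\<delta> / 2) * L ^ N * \<mu>A"
        unfolding \<mu>A_def using open_sets[of "ball z0 r"] by (simp add: space_M)
      also have "integral\<^sup>L M (\<lambda>z. G * U ^ N) = G * U ^ N * \<mu>T"
        unfolding \<mu>T_def by simp
      finally show ?thesis .
    qed
    have "G * U ^ N * \<mu>T < (\<delta> / 2) * L ^ N * \<mu>A"
    proof -
      have e: "U ^ N = (U / L) ^ N * L ^ N" using L0 by (simp add: power_divide)
      have P: "(U / L) ^ N * L ^ N \<ge> 0" using U0 L0 by simp
      have "G * U ^ N * \<mu>T = (G * \<mu>T) * ((U / L) ^ N * L ^ N)" unfolding e by (simp add: mult_ac)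
      also have "\<dots> \<le> (G * \<mu>T + 1) * ((U / L) ^ N * L ^ N)" using P by (intro mult_right_mono) auto
      finally have "G * U ^ N * \<mu>T \<le> (G * \<mu>T + 1) * (U / L) ^ N * L ^ N" by (simp add: mult_ac)
      also have "\<dots> < (G * \<mu>T + 1) * (\<delta> * \<mu>A / (2 * (G * \<mu>T + 1))) * L ^ N"
        using N G0 muT L0 by (intro mult_strict_right_mono mult_strict_left_mono) (auto simp: add_nonneg_pos)
      also have "\<dots> = (\<delta> * \<mu>A) / 2 * L ^ N" using G0 muT by (intro half_cancel add_nonneg_pos) auto
      also have "\<dots> = (\<delta> / 2) * L ^ N * \<mu>A" by simp
      finally show ?thesis .
    qed
    hence Hneg: "integral\<^sup>L M H < 0" unfolding intH by simp
    have Fneg: "integral\<^sup>L M F < 0" using integral_mono_AE[OF iF iH FH] Hneg by simp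
    have Ppos: "(\<integral>z. (cmod (poly q z))\<^sup>2 \<partial>M) \<ge> L ^ N * \<mu>A"
      unfolding \<mu>A_def by (rule int_lower[OF iP]) (use lowA L0 in auto)
    define n where "n = Re (l2ip M (poly q) (poly q))"
    have n: "n > 0" unfolding n_def Nre using Ppos L0 muA by (smt (verit) mult_pos_pos zero_less_power)
    have q0: "q \<noteq> 0"
    proof
      assume "q = 0" hence "n = 0" unfolding n_def by (simp add: l2ip_def)
      thus False using n by simp
    qed
    define x where "x = l2ip M (\<lambda>z. z * poly q z) (poly q) / l2ip M (poly q) (poly q)"
    have "x \<in> RR" unfolding x_def RR_def using q0 by blast
    hence xR: "x \<in> closure RR" using closure_subset by blast
    have Nq: "l2ip M (poly q) (poly q) = of_real n" unfolding n_def by (rule ip_real)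
    have "inner a x = Re (cnj a * l2ip M (\<lambda>z. z * poly q z) (poly q)) / n"
      unfolding inner_Re x_def Nq by (simp add: Re_divide_of_real)
    also have "Re (cnj a * l2ip M (\<lambda>z. z * poly q z) (poly q)) = (\<integral>z. g z * (cmod (poly q z))\<^sup>2 \<partial>M)"
      unfolding g_def by (rule Qre) (auto intro!: continuous_intros)
    finally have ix: "inner a x = (\<integral>z. g z * (cmod (poly q z))\<^sup>2 \<partial>M) / n" .
    have "integral\<^sup>L M F = (\<integral>z. g z * (cmod (poly q z))\<^sup>2 \<partial>M) - b * n"
    proof -
      have "integral\<^sup>L M F = (\<integral>z. g z * (cmod (poly q z))\<^sup>2 - b * (cmod (poly q z))\<^sup>2 \<partial>M)"
        unfolding F_def by (simp add: algebra_simps)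
      also have "\<dots> = (\<integral>z. g z * (cmod (poly q z))\<^sup>2 \<partial>M) - (\<integral>z. b * (cmod (poly q z))\<^sup>2 \<partial>M)"
        using iGP iP by (intro Bochner_Integration.integral_diff) auto
      finally show ?thesis unfolding n_def Nre by simp
    qed
    hence "inner a x < b" unfolding ix using Fneg n by (simp add: divide_less_eq)
    thus False using ab(2) xR by fastforce
  qed
qed

end

theorem corollary4:
  fixes M :: "complex measure"
  assumes "sets M = sets borel"
    and "finite_measure M"
    and "compact (msupp M)"
    and "infinite (msupp M)"
  shows "convex hull (msupp M) = closure (hess_numrange M)
       \<and> closure (hess_numrange M) = closure (\<Union>n. section_numrange M n)"
proof -
  interpret hm M by (rule hm.intro) (rule assms)+
  have e1: "hess_numrange M = RR" using hess_sub_R R_sub_hess by blast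
  have cl: "closed (convex hull K)" using compact_convex_hull[OF cK] compact_imp_closed by blast
  have "closure RR \<subseteq> convex hull K" by (rule closure_minimal[OF R_sub_hull cl])
  hence "convex hull K = closure RR" using hull_sub by blast
  thus ?thesis unfolding e1 sec_eq[unfolded e1] by simp
qed

end
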